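(* Let $X$ be a topological space, let $S\subseteq X$ be an $\alpha$-scaffold and let $\mathcal A$ be a cover of $S_{[0]}$. Then either there is $A_S\in\mathcal A$ such that $\mathrm{cor}\,S\in\overline{A_S\cap S_{[0]}}$, or there exists a countable family $\mathcal A_S\subseteq[\mathcal A]^\omega$ such that every $\mathcal A'\subseteq\mathcal A$ with $|\mathcal A'\cap\mathcal A''|=\omega$ for every $\mathcal A''\in\mathcal A_S$ satisfies $\mathrm{cor}\,S\in\overline{\bigcup\{S_{[0]}\cap B: B\in\mathcal A'\}}$.
   Context: Scaffolds in a space $X$ are defined by recursion. A pair $(S,\mathcal S)$ with $S\subseteq X$, $\mathcal S\subseteq 2^S$ is: (S.0) a $0$-scaffold if $S=\{x\}$, $\mathcal S=\{S\}$; then $\mathrm{ht}(S)=\mathrm{ht}_S(x)=0$ and $\mathrm{cor}\,S=x$. (S.1) an $\alpha$-scaffold if there are $x\in S$, pairwise disjoint open sets $U_n\subseteq X$, and $\alpha_n$-scaffolds $(S_n,\mathcal S_n)$ $(n\in\omega)$ with $(\alpha_n)$ nondecreasing, $\alpha=\min\{\beta:\beta>\alpha_n\text{ for all }n\}$, $\mathrm{cor}\,S_n\to x$, $\overline{S_n}\subseteq U_n$, $x\notin\overline{U_n}$, $S=\{x\}\cup\bigcup_nS_n$, $\mathcal S=\{S\}\cup\bigcup_n\mathcal S_n$; then $\mathrm{ht}(S)=\mathrm{ht}_S(x)=\alpha$, $\mathrm{ht}_S(x')=\mathrm{ht}_{S_n}(x')$ for $x'\in S_n$, and $\mathrm{cor}\,S=x$.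 A set $S\subseteq X$ is an $\alpha$-scaffold if such a stratification $\mathcal S$ exists; $\mathrm{cor}\,S$ and $\mathrm{ht}_S$ do not depend on its choice. $S_{[0]}=\{s\in S:\mathrm{ht}_S(s)=0\}$. $[\mathcal A]^\omega$ denotes the set of countably infinite subsets of $\mathcal A$. *)

theory Defs
  imports "HOL-Analysis.Analysis"
begin

text \<open>Ordinal heights are taken in an arbitrary well-ordered type 'o; height 0 is
the least element of 'o.\<close>

definition ord_zero :: "'o::wellorder" where
  "ord_zero = (LEAST b. True)"

text \<open>scaffold S c ht \<alpha>: S is an \<alpha>-scaffold (in the ambient topological space 'a)
with core c and height function ht (relevant on S only), witnessed by a stratification.\<close>

inductive scaffold :: "'a::topological_space set \<Rightarrow> 'a \<Rightarrow> ('a \<Rightarrow> 'o::wellorder) \<Rightarrow> 'o \<Rightarrow> bool"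
where
  base: "ht x = ord_zero \<Longrightarrow> scaffold {x} x ht ord_zero"
| step: "\<lbrakk> \<forall>n. scaffold (Sn n) (cn n) (hn n) (an n);
          mono an;
          \<exists>b. \<forall>n. an n < b;
          \<alpha> = (LEAST b. \<forall>n. an n < b);
          \<forall>n. open (U n);
          \<forall>m n. m \<noteq> n \<longrightarrow> U m \<inter> U n = {};
          cn \<longlonglongrightarrow> x;
          \<forall>n. closure (Sn n) \<subseteq> U n;
          \<forall>n. x \<notin> closure (U n);
          S = insert x (\<Union>n. Sn n);
          ht x = \<alpha>;
          \<forall>n. \<forall>y\<in>Sn n. ht y = hn n y \<rbrakk>
        \<Longrightarrow> scaffold S x ht \<alpha>"

definition level0 :: "'a set \<Rightarrow> ('a \<Rightarrow> 'o::wellorder) \<Rightarrow> 'a set" where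
  "level0 S ht = {s\<in>S. ht s = ord_zero}"

end

theory Submission
  imports Defs
begin

lemma seq_closed_infinite:
  fixes cn :: "nat \<Rightarrow> 'a::topological_space"
  assumes "cn \<longlonglongrightarrow> x" "closed F" "infinite M" "\<forall>n\<in>M. cn n \<in> F"
  shows "x \<in> F"
proof (rule ccontr)
  assume "x \<notin> F"
  then have "eventually (\<lambda>n. cn n \<in> -F) sequentially"
    using topological_tendstoD[OF assms(1), of "-F"] assms(2) by (simp add: closed_def)
  then obtain N where N: "\<forall>n\<ge>N. cn n \<notin> F" by (auto simp: eventually_sequentially)
  from assms(3) obtain n where "n \<in> M" "n \<ge> N"
    using infinite_nat_iff_unbounded_le by blast
  with N assms(4) show False by blast
qed

definition goodB where
  "goodB c L \<A> \<A>S \<longleftrightarrow> countable \<A>S \<and> (\<forall>\<B>\<in>\<A>S. \<B> \<subseteq> \<A> \<and> countable \<B> \<and> infinite \<B>)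
            \<and> (\<forall>\<A>'. \<A>' \<subseteq> \<A> \<longrightarrow> (\<forall>\<B>\<in>\<A>S. infinite (\<A>' \<inter> \<B>))
                 \<longrightarrow> c \<in> closure (\<Union>B\<in>\<A>'. L \<inter> B))"

definition good where
  "good S c ht \<A> \<longleftrightarrow> (\<exists>A\<in>\<A>. c \<in> closure (A \<inter> level0 S ht))
      \<or> (\<exists>\<A>S. goodB c (level0 S ht) \<A> \<A>S)"

lemma main:
  assumes "scaffold S c ht \<alpha>" "level0 S ht \<subseteq> \<Union>\<A>"
  shows "good S c ht \<A>"
  using assms
proof (induction arbitrary: \<A> rule: scaffold.induct)
  case (base ht x)
  then have "level0 {x} ht = {x}" by (auto simp: level0_def)
  with base obtain A where "A \<in> \<A>" "x \<in> A" by auto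
  then have "x \<in> closure (A \<inter> level0 {x} ht)"
    using \<open>level0 {x} ht = {x}\<close> closure_subset[of "A \<inter> {x}"] by simp
  then show ?case unfolding good_def using \<open>A \<in> \<A>\<close> by blast
next
  case (step Sn cn hn an \<alpha> U x S ht)
  define L where "L = level0 S ht"
  define Ln where "Ln n = level0 (Sn n) (hn n)" for n
  have LnL: "Ln n \<subseteq> L" for n
    using step.hyps(9,11) by (auto simp: Ln_def L_def level0_def)
  have "level0 (Sn n) (hn n) \<subseteq> \<Union>\<A>" for n
    using LnL[of n] step.prems unfolding Ln_def L_def by (rule subset_trans)
  then have G: "good (Sn n) (cn n) (hn n) \<A>" for n
    using step.IH by blast
  have "\<exists>A \<B>. (A \<in> \<A> \<and> cn n \<in> closure (A \<inter> Ln n)) \<or> goodB (cn n) (Ln n) \<A> \<B>" for n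
  proof -
    from G[of n] have "(\<exists>A\<in>\<A>. cn n \<in> closure (A \<inter> Ln n)) \<or> (\<exists>\<B>. goodB (cn n) (Ln n) \<A> \<B>)"
      unfolding good_def Ln_def .
    then show ?thesis by blast
  qed
  then have "\<forall>n. \<exists>p. (fst p \<in> \<A> \<and> cn n \<in> closure (fst p \<inter> Ln n)) \<or> goodB (cn n) (Ln n) \<A> (snd p)"
    by (metis fst_conv snd_conv)
  then obtain f where f: "\<forall>n. (fst (f n) \<in> \<A> \<and> cn n \<in> closure (fst (f n) \<inter> Ln n)) \<or> goodB (cn n) (Ln n) \<A> (snd (f n))"
    using choice[of "\<lambda>n p. (fst p \<in> \<A> \<and> cn n \<in> closure (fst p \<inter> Ln n)) \<or> goodB (cn n) (Ln n) \<A> (snd p)"] by blast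
  define Af where "Af n = fst (f n)" for n
  define Sf where "Sf n = snd (f n)" for n
  have AS: "\<And>n. (Af n \<in> \<A> \<and> cn n \<in> closure (Af n \<inter> Ln n)) \<or> goodB (cn n) (Ln n) \<A> (Sf n)"
    using f unfolding Af_def Sf_def by blast
  define Na where "Na = {n. Af n \<in> \<A> \<and> cn n \<in> closure (Af n \<inter> Ln n)}"
  show ?case
  proof (cases "\<exists>A. infinite {n\<in>Na. Af n = A}")
    case True
    then obtain A where inf: "infinite {n\<in>Na. Af n = A}" by blast
    then have "{n\<in>Na. Af n = A} \<noteq> {}" by (metis finite.emptyI)
    then obtain n0 where "n0 \<in> Na" "Af n0 = A" by blast
    then have "A \<in> \<A>" by (auto simp: Na_def)
    have "\<forall>n\<in>{n\<in>Na. Af n = A}. cn n \<in> closure (A \<inter> L)"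
    proof
      fix n assume "n \<in> {n\<in>Na. Af n = A}"
      then have "cn n \<in> closure (A \<inter> Ln n)" by (auto simp: Na_def)
      moreover have "closure (A \<inter> Ln n) \<subseteq> closure (A \<inter> L)"
        using LnL by (intro closure_mono) blast
      ultimately show "cn n \<in> closure (A \<inter> L)" by blast
    qed
    then have "x \<in> closure (A \<inter> L)"
      using seq_closed_infinite[OF step.hyps(6) _ inf] by blast
    then show ?thesis unfolding good_def L_def using \<open>A \<in> \<A>\<close> by blast
  next
    case False
    then have fin: "\<And>A. finite {n\<in>Na. Af n = A}" by blast
    define AS where "AS = (\<Union>n\<in>-Na. Sf n) \<union> (if infinite Na then {Af ` Na} else {})"
    have Sfn0: "n \<notin> Na \<Longrightarrow> goodB (cn n) (Ln n) \<A> (Sf n)" for n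
      using AS[of n] unfolding Na_def by blast
    have Sfn: "n \<notin> Na \<Longrightarrow> countable (Sf n) \<and> (\<forall>\<B>'\<in>Sf n. \<B>' \<subseteq> \<A> \<and> countable \<B>' \<and> infinite \<B>')
            \<and> (\<forall>\<A>'. \<A>' \<subseteq> \<A> \<longrightarrow> (\<forall>\<B>'\<in>Sf n. infinite (\<A>' \<inter> \<B>'))
                 \<longrightarrow> cn n \<in> closure (\<Union>B\<in>\<A>'. Ln n \<inter> B))" for n
      using Sfn0[of n] unfolding goodB_def .
    have imgfin: "finite (Af ` M) \<Longrightarrow> M \<subseteq> Na \<Longrightarrow> finite M" for M
    proof -
      assume f: "finite (Af ` M)" and s: "M \<subseteq> Na"
      have "M \<subseteq> (\<Union>A\<in>Af ` M. {n\<in>Na. Af n = A})" using s by auto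
      moreover have "finite (\<Union>A\<in>Af ` M. {n\<in>Na. Af n = A})" using f fin by blast
      ultimately show "finite M" using finite_subset by blast
    qed
    have c1: "countable AS" unfolding AS_def
      using Sfn by (auto intro!: countable_UN)
    have c2: "\<forall>\<B>\<in>AS. \<B> \<subseteq> \<A> \<and> countable \<B> \<and> infinite \<B>"
    proof
      fix \<B> assume "\<B> \<in> AS"
      then consider n where "n \<notin> Na" "\<B> \<in> Sf n" | "infinite Na" "\<B> = Af ` Na"
        unfolding AS_def by (auto split: if_splits)
      then show "\<B> \<subseteq> \<A> \<and> countable \<B> \<and> infinite \<B>"
      proof cases
        case 1 then show ?thesis using Sfn by blast
      next
        case 2 then show ?thesis using imgfin[of Na] by (auto simp: Na_def)
      qed
    qed
    have c3: "x \<in> closure (\<Union>B\<in>\<A>'. L \<inter> B)"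
      if A': "\<A>' \<subseteq> \<A>" "\<forall>\<B>\<in>AS. infinite (\<A>' \<inter> \<B>)" for \<A>'
    proof -
      define V where "V = (\<Union>B\<in>\<A>'. L \<inter> B)"
      have "\<exists>M. infinite M \<and> (\<forall>n\<in>M. cn n \<in> closure V)"
      proof (cases "infinite Na")
        case True
        define M where "M = {n\<in>Na. Af n \<in> \<A>'}"
        have "Af ` Na \<in> AS" using True by (auto simp: AS_def)
        then have "infinite (\<A>' \<inter> Af ` Na)" using A' by blast
        moreover have "Af ` M = \<A>' \<inter> Af ` Na" by (auto simp: M_def)
        ultimately have "infinite M" using finite_imageI by metis
        moreover have "\<forall>n\<in>M. cn n \<in> closure V"
        proof
          fix n assume "n \<in> M"
          then have "cn n \<in> closure (Af n \<inter> Ln n)" "Af n \<in> \<A>'" by (auto simp: M_def Na_def)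
          moreover have "Af n \<inter> Ln n \<subseteq> V" using LnL \<open>Af n \<in> \<A>'\<close> by (auto simp: V_def)
          ultimately show "cn n \<in> closure V" using closure_mono by blast
        qed
        ultimately show ?thesis by blast
      next
        case False
        then have "infinite (-Na)" using finite_compl by blast
        moreover have "\<forall>n\<in>-Na. cn n \<in> closure V"
        proof
          fix n assume n: "n \<in> -Na"
          then have "Sf n \<subseteq> AS" by (auto simp: AS_def)
          then have "cn n \<in> closure (\<Union>B\<in>\<A>'. Ln n \<inter> B)" using Sfn[of n] n A' by blast
          moreover have "(\<Union>B\<in>\<A>'. Ln n \<inter> B) \<subseteq> V" using LnL by (auto simp: V_def)
          ultimately show "cn n \<in> closure V" using closure_mono by blast
        qed
        ultimately show ?thesis by blast
      qed
      then show ?thesis using seq_closed_infinite[OF step.hyps(6)] V_def by blast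
    qed
    have "goodB x L \<A> AS" unfolding goodB_def using c1 c2 c3 by blast
    then show ?thesis unfolding good_def L_def[symmetric] by blast
  qed
qed

theorem lemma13:
  fixes S :: "'a::topological_space set" and c :: 'a
    and ht :: "'a \<Rightarrow> 'o::wellorder" and \<alpha> :: 'o
    and \<A> :: "'a set set"
  assumes "scaffold S c ht \<alpha>"
    and "level0 S ht \<subseteq> \<Union>\<A>"
  shows "(\<exists>A\<in>\<A>. c \<in> closure (A \<inter> level0 S ht))
      \<or> (\<exists>\<A>S. countable \<A>S \<and> (\<forall>\<B>\<in>\<A>S. \<B> \<subseteq> \<A> \<and> countable \<B> \<and> infinite \<B>)
            \<and> (\<forall>\<A>'. \<A>' \<subseteq> \<A> \<longrightarrow> (\<forall>\<B>\<in>\<A>S. infinite (\<A>' \<inter> \<B>))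
                 \<longrightarrow> c \<in> closure (\<Union>B\<in>\<A>'. level0 S ht \<inter> B)))"
  using main[OF assms] unfolding good_def goodB_def .

end
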